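(* Let $q$ be a prime power with $n\mid q-1$, let $\zeta_n\in\mathbb{F}_q$ be a primitive $n$-th root of unity and $g\ge1$. Then the number of $\operatorname{PGl}_n(\mathbb{F}_q)$-conjugacy classes (under simultaneous conjugation) of tuples $(A_1,B_1,\dots,A_g,B_g)\in\operatorname{Sl}_n(\mathbb{F}_q)^{2g}$ with $[A_1,B_1]\cdots[A_g,B_g]=\zeta_nI$ equals the number of such tuples divided by $|\operatorname{PGl}_n(\mathbb{F}_q)|$.
   Context: $[A,B]=ABA^{-1}B^{-1}$. The set of these conjugacy classes is what the paper calls the set of $\mathbb{F}_q$-points of the twisted character variety $\mathcal{M}^g(\operatorname{Sl}_n)(q)$. *)

theory Defs
  imports "HOL-Analysis.Analysis"
begin

type_synonym ('a, 'n) sqmat = "'a ^ 'n ^ 'n"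

definition GL :: "('a::field, 'n::finite) sqmat set" where
  "GL = {P. invertible P}"

definition SL :: "('a::field, 'n::finite) sqmat set" where
  "SL = {A. det A = 1}"

definition commutator :: "('a::field, 'n::finite) sqmat \<Rightarrow> ('a, 'n) sqmat \<Rightarrow> ('a, 'n) sqmat" where
  "commutator A B = A ** B ** matrix_inv A ** matrix_inv B"

definition comm_prod :: "(('a::field, 'n::finite) sqmat \<times> ('a, 'n) sqmat) list \<Rightarrow> ('a, 'n) sqmat" where
  "comm_prod xs = foldr (\<lambda>(A, B) M. commutator A B ** M) xs (mat 1)"

definition twisted_tuples :: "nat \<Rightarrow> 'a::field \<Rightarrow> ((('a, 'n::finite) sqmat \<times> ('a, 'n) sqmat) list) set" where
  "twisted_tuples g \<zeta> = {xs. length xs = g \<and> (\<forall>(A, B) \<in> set xs. A \<in> SL \<and> B \<in> SL)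
       \<and> comm_prod xs = mat \<zeta>}"

definition conj_tuple :: "('a::field, 'n::finite) sqmat \<Rightarrow> (('a, 'n) sqmat \<times> ('a, 'n) sqmat) list
    \<Rightarrow> (('a, 'n) sqmat \<times> ('a, 'n) sqmat) list" where
  "conj_tuple P xs = map (\<lambda>(A, B). (P ** A ** matrix_inv P, P ** B ** matrix_inv P)) xs"

text \<open>Orbit relation of simultaneous conjugation on a set X of tuples. Since scalar
  matrices act trivially, the PGl_n-orbits coincide with the Gl_n-orbits.\<close>
definition conj_rel :: "(('a::field, 'n::finite) sqmat \<times> ('a, 'n) sqmat) list set
    \<Rightarrow> ((('a, 'n) sqmat \<times> ('a, 'n) sqmat) list \<times> (('a, 'n) sqmat \<times> ('a, 'n) sqmat) list) set" where
  "conj_rel X = {(s, t). s \<in> X \<and> t \<in> X \<and> (\<exists>P \<in> GL. t = conj_tuple P s)}"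

definition scalar_rel :: "(('a::field, 'n::finite) sqmat \<times> ('a, 'n) sqmat) set" where
  "scalar_rel = {(P, Q). P \<in> GL \<and> Q \<in> GL \<and> (\<exists>c. c \<noteq> 0 \<and> Q = mat c ** P)}"

definition PGL :: "('a::field, 'n::finite) sqmat set set" where
  "PGL = GL // scalar_rel"

definition primitive_root :: "nat \<Rightarrow> 'a::field \<Rightarrow> bool" where
  "primitive_root n z \<longleftrightarrow> z ^ n = 1 \<and> (\<forall>k. 0 < k \<and> k < n \<longrightarrow> z ^ k \<noteq> 1)"

end

theory Submission
  imports Defs "HOL-Algebra.Algebraic_Closure_Type"
begin

no_notation fps_nth (infixl "$" 75)

lemma mat_comm: "mat c ** (Z::'b::comm_ring_1^'n::finite^'n) = Z ** mat c"
  by (simp add: vec_eq_iff matrix_matrix_mult_def mat_def mult.commute if_distrib if_distribR cong: if_cong)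

lemma mat_mult_left: "mat a ** (Z::'b::comm_ring_1^'n::finite^'m) = (\<chi> i j. a * Z$i$j)"
  by (simp add: vec_eq_iff matrix_matrix_mult_def mat_def if_distrib if_distribR cong: if_cong)

lemma mat_mult_mat: "mat a ** (mat b :: 'b::comm_ring_1^'n::finite^'n) = mat (a*b)"
  unfolding mat_mult_left by (simp add: vec_eq_iff mat_def)

lemma minv_r: "invertible (A::'b::field^'n::finite^'n) \<Longrightarrow> A ** matrix_inv A = mat 1"
  unfolding matrix_inv_def invertible_def by (rule someI_ex[THEN conjunct1])

lemma minv_l: "invertible (A::'b::field^'n::finite^'n) \<Longrightarrow> matrix_inv A ** A = mat 1"
  unfolding matrix_inv_def invertible_def by (rule someI_ex[THEN conjunct2])

lemma minv_unique: "(A::'b::field^'n::finite^'n) ** B = mat 1 \<Longrightarrow> matrix_inv A = B"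
proof -
  assume h: "A ** B = mat 1"
  hence inv: "invertible A" using invertible_right_inverse by blast
  have "matrix_inv A = matrix_inv A ** (A ** B)" by (simp add: h)
  also have "\<dots> = B" by (simp add: matrix_mul_assoc minv_l[OF inv])
  finally show ?thesis .
qed

lemma invertible_minv: "invertible (A::'b::field^'n::finite^'n) \<Longrightarrow> invertible (matrix_inv A)"
  using minv_l invertible_right_inverse by blast

lemma minv_minv: "invertible (A::'b::field^'n::finite^'n) \<Longrightarrow> matrix_inv (matrix_inv A) = A"
  using minv_l minv_unique by blast

lemma minv_mult: "invertible (A::'b::field^'n::finite^'n) \<Longrightarrow> invertible (B::'b^'n^'n) \<Longrightarrow>
   matrix_inv (A ** B) = matrix_inv B ** matrix_inv A"
proof -
  assume a: "invertible A" and b: "invertible B"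
  have "A ** B ** (matrix_inv B ** matrix_inv A) = A ** (B ** matrix_inv B) ** matrix_inv A"
    by (simp only: matrix_mul_assoc)
  also have "\<dots> = mat 1" by (simp only: minv_r[OF a] minv_r[OF b] matrix_mul_rid)
  finally show ?thesis by (rule minv_unique)
qed

lemma minv_conj: "invertible (P::'b::field^'n::finite^'n) \<Longrightarrow> invertible (A::'b^'n^'n) \<Longrightarrow>
   matrix_inv (P ** A ** matrix_inv P) = P ** matrix_inv A ** matrix_inv P"
proof -
  assume p: "invertible P" and a: "invertible A"
  have "P ** A ** matrix_inv P ** (P ** matrix_inv A ** matrix_inv P)
      = P ** (A ** (matrix_inv P ** P) ** matrix_inv A) ** matrix_inv P"
    by (simp only: matrix_mul_assoc)
  also have "\<dots> = mat 1" by (simp only: minv_r[OF a] minv_l[OF p] minv_r[OF p] matrix_mul_rid)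
  finally show ?thesis by (rule minv_unique)
qed

lemma cancel_l: "invertible (P::'b::field^'n::finite^'n) \<Longrightarrow> matrix_inv P ** (P ** Z) = Z"
  by (simp add: matrix_mul_assoc minv_l)

lemma cancel_r: "invertible (P::'b::field^'n::finite^'n) \<Longrightarrow> P ** (matrix_inv P ** Z) = Z"
  by (simp add: matrix_mul_assoc minv_r)

lemma invertible_conj: "invertible (P::'b::field^'n::finite^'n) \<Longrightarrow> invertible (A::'b^'n^'n) \<Longrightarrow>
   invertible (P ** A ** matrix_inv P)"
  by (intro invertible_mult invertible_minv)

lemma commutator_conj: "invertible (P::'b::field^'n::finite^'n) \<Longrightarrow> invertible (A::'b^'n^'n) \<Longrightarrow> invertible (B::'b^'n^'n) \<Longrightarrow>
  commutator (P ** A ** matrix_inv P) (P ** B ** matrix_inv P) = P ** commutator A B ** matrix_inv P"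
proof -
  assume p: "invertible P" and a: "invertible A" and b: "invertible B"
  show ?thesis
    unfolding commutator_def minv_conj[OF p a] minv_conj[OF p b]
    by (simp only: matrix_mul_assoc[symmetric] cancel_l[OF p])
qed

lemma comm_prod_Nil: "comm_prod [] = mat 1" by (simp add: comm_prod_def)
lemma comm_prod_Cons: "comm_prod ((A,B)#xs) = commutator A B ** comm_prod xs" by (simp add: comm_prod_def)
lemma conj_tuple_Nil: "conj_tuple P [] = []" by (simp add: conj_tuple_def)
lemma conj_tuple_Cons: "conj_tuple P ((A,B)#xs) = (P ** A ** matrix_inv P, P ** B ** matrix_inv P) # conj_tuple P xs" by (simp add: conj_tuple_def)

lemma comm_prod_conj:
  assumes p: "invertible (P::'b::field^'n::finite^'n)"
  and "\<forall>(A,B)\<in>set xs. invertible A \<and> invertible B"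
  shows "comm_prod (conj_tuple P xs) = P ** comm_prod xs ** matrix_inv P"
  using assms(2)
proof (induction xs)
  case Nil
  then show ?case by (simp only: comm_prod_Nil conj_tuple_Nil matrix_mul_rid minv_r[OF p])
next
  case (Cons x xs)
  obtain A B where x: "x = (A,B)" by fastforce
  have a: "invertible A" and b: "invertible B" using Cons.prems x by auto
  have ih: "comm_prod (conj_tuple P xs) = P ** comm_prod xs ** matrix_inv P"
    using Cons by auto
  have "comm_prod (conj_tuple P (x#xs)) = commutator (P ** A ** matrix_inv P) (P ** B ** matrix_inv P) ** comm_prod (conj_tuple P xs)"
    by (simp only: x conj_tuple_Cons comm_prod_Cons)
  also have "\<dots> = P ** (commutator A B ** comm_prod xs) ** matrix_inv P"
    unfolding commutator_conj[OF p a b] ih by (simp only: matrix_mul_assoc[symmetric] cancel_l[OF p])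
  also have "\<dots> = P ** comm_prod (x#xs) ** matrix_inv P"
    by (simp only: comm_prod_Cons x)
  finally show ?case .
qed

lemma conj_mat: "invertible (P::'b::field^'n::finite^'n) \<Longrightarrow> P ** mat c ** matrix_inv P = mat c"
  by (simp add: mat_comm matrix_mul_assoc[symmetric] cancel_r)

definition blk :: "'n set \<Rightarrow> 'b::field^'n::finite^'n \<Rightarrow> bool" where
  "blk I Z \<longleftrightarrow> (\<forall>j i. j \<notin> I \<longrightarrow> i \<in> I \<longrightarrow> Z$j$i = 0)"

definition cut :: "'n set \<Rightarrow> 'b::field^'n::finite^'n \<Rightarrow> 'b^'n^'n" where
  "cut I Z = (\<chi> j i. if i \<in> I then Z$j$i else (if j = i then 1 else 0))"

lemma blk_mult: assumes "blk I Z" "blk I Y2" shows "blk I (Z ** Y2)"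
  unfolding blk_def
proof (intro allI impI)
  fix j i assume j: "j \<notin> I" and i: "i \<in> I"
  have z: "\<forall>l\<in>UNIV. Z$j$l * Y2$l$i = 0"
    using assms j i unfolding blk_def by (metis mult_zero_left mult_zero_right)
  have "(Z ** Y2)$j$i = (\<Sum>l\<in>UNIV. Z$j$l * Y2$l$i)" by (simp add: matrix_matrix_mult_def)
  also have "\<dots> = 0" using z by (intro sum.neutral) blast
  finally show "(Z ** Y2)$j$i = 0" .
qed

lemma cut_mult: assumes "blk I Z" "blk I Y2" shows "cut I (Z ** Y2) = cut I Z ** cut I Y2"
proof -
  have "(cut I Z ** cut I Y2)$j$i = cut I (Z ** Y2) $j$i" for j i
  proof (cases "i \<in> I")
    case True
    have z: "\<forall>l\<in>UNIV. cut I Z$j$l * cut I Y2$l$i = Z$j$l * Y2$l$i"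
      using assms(2) True unfolding cut_def blk_def by auto
    have "(cut I Z ** cut I Y2)$j$i = (\<Sum>l\<in>UNIV. cut I Z$j$l * cut I Y2$l$i)" by (simp add: matrix_matrix_mult_def)
    also have "\<dots> = (\<Sum>l\<in>UNIV. Z$j$l * Y2$l$i)" using z by (intro sum.cong) auto
    also have "\<dots> = cut I (Z ** Y2) $j$i" using True by (simp add: matrix_matrix_mult_def cut_def)
    finally show ?thesis .
  next
    case False
    have z: "\<forall>l\<in>UNIV. cut I Z$j$l * cut I Y2$l$i = (if l = i then cut I Z$j$l else 0)"
      using False unfolding cut_def by auto
    have "(cut I Z ** cut I Y2)$j$i = (\<Sum>l\<in>UNIV. cut I Z$j$l * cut I Y2$l$i)" by (simp add: matrix_matrix_mult_def)
    also have "\<dots> = (\<Sum>l\<in>UNIV. (if l = i then cut I Z$j$l else 0))" using z by (intro sum.cong) auto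
    also have "\<dots> = cut I Z $j$i" by simp
    finally have "(cut I Z ** cut I Y2)$j$i = cut I Z $j$i" .
    then show ?thesis using False by (simp add: cut_def)
  qed
  thus ?thesis by (simp add: vec_eq_iff)
qed

lemma mat_nth: "mat c $ i $ j = (if i = j then c else 0)" by (simp add: mat_def)

lemma blk_mat: "blk I (mat c)" by (auto simp: blk_def mat_def)

lemma cut_one: "cut I (mat 1) = mat 1" by (simp add: cut_def mat_def vec_eq_iff)

lemma det_cut_mat: "det (cut I (mat c :: 'b::field^'n::finite^'n)) = c ^ card I"
proof -
  have "det (cut I (mat c :: 'b::field^'n::finite^'n)) = (\<Prod>i\<in>UNIV. cut I (mat c :: 'b::field^'n::finite^'n) $i$i)"
    by (rule det_diagonal) (simp add: cut_def mat_def)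
  also have "\<dots> = (\<Prod>i\<in>UNIV. if i \<in> I then c else 1)" by (intro prod.cong) (auto simp: cut_def mat_nth)
  also have "\<dots> = c ^ card I" by (simp add: prod.If_cases)
  finally show ?thesis .
qed

lemma det_cut_inv: assumes "invertible A" "blk I A" "blk I (matrix_inv A)"
  shows "det (cut I A) * det (cut I (matrix_inv A)) = 1"
proof -
  have "det (cut I A) * det (cut I (matrix_inv A)) = det (cut I A ** cut I (matrix_inv A))"
    by (simp add: det_mul)
  also have "\<dots> = det (cut I (A ** matrix_inv A))" by (simp add: cut_mult assms)
  also have "\<dots> = 1" by (simp add: minv_r[OF assms(1)] cut_one)
  finally show ?thesis .
qed

definition good_pair :: "'n set \<Rightarrow> ('b::field^'n::finite^'n) \<times> ('b^'n^'n) \<Rightarrow> bool" where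
  "good_pair I AB \<longleftrightarrow> (case AB of (A,B) \<Rightarrow> invertible A \<and> invertible B \<and> blk I A \<and> blk I B
      \<and> blk I (matrix_inv A) \<and> blk I (matrix_inv B))"

lemma det_cut_commutator: assumes "good_pair I (A,B)"
  shows "blk I (commutator A B) \<and> det (cut I (commutator A B)) = 1"
proof -
  have a: "invertible A" "blk I A" "blk I (matrix_inv A)" and b: "invertible B" "blk I B" "blk I (matrix_inv B)"
    using assms by (auto simp: good_pair_def)
  have bl: "blk I (commutator A B)" unfolding commutator_def by (intro blk_mult a b)
  have "cut I (commutator A B) = cut I A ** cut I B ** cut I (matrix_inv A) ** cut I (matrix_inv B)"
    unfolding commutator_def by (simp add: cut_mult blk_mult a b)
  then have "det (cut I (commutator A B)) = (det (cut I A) * det (cut I (matrix_inv A))) * (det (cut I B) * det (cut I (matrix_inv B)))"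
    by (simp add: det_mul)
  also have "\<dots> = 1" using det_cut_inv[OF a] det_cut_inv[OF b] by simp
  finally show ?thesis using bl by simp
qed

lemma comm_prod_block: assumes "\<forall>x\<in>set xs. good_pair I x"
  shows "blk I (comm_prod xs) \<and> det (cut I (comm_prod xs)) = 1"
  using assms
proof (induction xs)
  case Nil
  then show ?case by (simp add: comm_prod_Nil blk_mat cut_one)
next
  case (Cons x xs)
  obtain A B where x: "x = (A,B)" by fastforce
  have g: "good_pair I (A,B)" using Cons.prems x by auto
  have ih: "blk I (comm_prod xs) \<and> det (cut I (comm_prod xs)) = 1" using Cons by auto
  show ?case using det_cut_commutator[OF g] ih
    by (simp add: x comm_prod_Cons blk_mult cut_mult det_mul)
qed

lemma col_extract: "((Xm::'b::field^'n::finite^'m) *v (\<chi> k. if k = i then 1 else 0)) $ j = Xm $ j $ i"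
  by (simp add: matrix_vector_mult_def if_distrib if_distribR cong: if_cong)

lemma comm_inv: assumes "invertible (A::'b::field^'n::finite^'n)" "M ** A = A ** M"
  shows "M ** matrix_inv A = matrix_inv A ** M"
proof -
  have "M ** matrix_inv A = matrix_inv A ** (A ** M) ** matrix_inv A"
    by (simp add: matrix_mul_assoc minv_l[OF assms(1)])
  also have "\<dots> = matrix_inv A ** M" 
    by (simp only: assms(2)[symmetric] matrix_mul_assoc[symmetric] minv_r[OF assms(1)] matrix_mul_rid)
  finally show ?thesis .
qed

lemma kernel_claim:
  fixes M :: "'b::field^'n::finite^'n" and xs :: "(('b^'n^'n) \<times> ('b^'n^'n)) list"
  assumes inv: "\<forall>(A,B)\<in>set xs. invertible A \<and> invertible B"
    and cp: "comm_prod xs = mat \<zeta>" and pr: "primitive_root CARD('n) \<zeta>"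
    and comm: "\<forall>(A,B)\<in>set xs. M ** A = A ** M \<and> M ** B = B ** M"
  shows "M = 0 \<or> invertible M"
proof (rule ccontr)
  assume "\<not> (M = 0 \<or> invertible M)"
  hence M0: "M \<noteq> 0" and ni: "\<not> invertible M" by auto
  define W where "W = {v. M *v v = 0}"
  have subW: "vec.subspace W"
    unfolding W_def by (rule vec.subspace_kernel)
  obtain w where w: "M *v w = 0" "w \<noteq> 0"
    using ni invertible_left_inverse[of M] matrix_left_invertible_ker[of M] by blast
  obtain BW where BW: "BW \<subseteq> W" "vec.independent BW" "W \<subseteq> vec.span BW" "card BW = vec.dim W"
    by (rule vec.basis_exists)
  define B where "B = vec.extend_basis BW"
  have BWB: "BW \<subseteq> B" unfolding B_def by (rule vec.extend_basis_superset[OF BW(2)])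
  have indB: "vec.independent B" unfolding B_def by (rule vec.independent_extend_basis[OF BW(2)])
  have spB: "vec.span B = UNIV" unfolding B_def by (rule vec.span_extend_basis[OF BW(2)])
  have finB: "finite B" using indB by (rule vec.finiteI_independent)
  have finBW: "finite BW" using BW(2) by (rule vec.finiteI_independent)
  have "card B = vec.dim B" using vec.dim_eq_card_independent[OF indB] by simp
  also have "\<dots> = vec.dim (vec.span B)" by (simp only: vec.dim_span)
  also have "\<dots> = CARD('n)" unfolding spB by (rule vec_dim_card)
  finally have cardB: "card B = CARD('n)" .
  obtain f where f: "bij_betw f (UNIV::'n set) B"
    using finite_same_card_bij[OF finite[of UNIV] finB] cardB by auto
  define I where "I = {i. f i \<in> BW}"
  have fUB: "f ` UNIV = B" using f by (simp add: bij_betw_def)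
  have fI: "f ` I = BW"
  proof
    show "f ` I \<subseteq> BW" unfolding I_def by blast
    show "BW \<subseteq> f ` I"
    proof
      fix b assume b: "b \<in> BW"
      then obtain i where "b = f i" using BWB fUB by blast
      thus "b \<in> f ` I" using b unfolding I_def by blast
    qed
  qed
  have injf: "inj f" using f by (simp add: bij_betw_def)
  define S :: "'b^'n^'n" where "S = (\<chi> r i. f i $ r)"
  have Sx: "S *v x = (\<Sum>i\<in>UNIV. x$i *s f i)" for x
    by (simp add: S_def matrix_vector_mult_def vec_eq_iff sum_component mult.commute)
  have Sinj: "S *v x = 0 \<Longrightarrow> x = 0" for x
  proof -
    assume h: "S *v x = 0"
    define c where "c v = x $ (inv_into UNIV f v)" for v
    have "(\<Sum>v\<in>B. c v *s v) = (\<Sum>i\<in>UNIV. c (f i) *s f i)"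
      using sum.reindex[of f UNIV "\<lambda>v. c v *s v"] f by (simp add: bij_betw_def)
    also have "\<dots> = (\<Sum>i\<in>UNIV. x$i *s f i)" by (simp add: c_def injf)
    also have "\<dots> = 0" using h Sx by simp
    finally have "\<forall>v\<in>B. c v = 0" using indB vec.independent_explicit by blast
    hence "x $ i = 0" for i using f by (auto simp: c_def injf bij_betw_def)
    thus "x = 0" by (simp add: vec_eq_iff)
  qed
  have invS: "invertible S"
    using Sinj invertible_left_inverse[of S] matrix_left_invertible_ker[of S] by blast
  define S' where "S' = matrix_inv S"
  have invS': "invertible S'" unfolding S'_def by (rule invertible_minv[OF invS])
  have S'S: "matrix_inv S' = S" unfolding S'_def by (rule minv_minv[OF invS])
  have SS': "S *v (S' *v v) = v" for v
    by (simp add: matrix_vector_mul_assoc S'_def minv_r[OF invS])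
  have spanW: "vec.span BW \<subseteq> W" using BW(1) subW by (rule vec.span_minimal)
  have E: "S *v x \<in> W \<longleftrightarrow> (\<forall>j. j \<notin> I \<longrightarrow> x$j = 0)" for x
  proof
    assume h: "S *v x \<in> W"
    then have "S *v x \<in> vec.span BW" using BW(3) by blast
    then obtain u where u: "S *v x = (\<Sum>v\<in>BW. u v *s v)"
      using vec.span_finite[OF finBW] by auto
    have "(\<Sum>v\<in>BW. u v *s v) = (\<Sum>i\<in>I. u (f i) *s f i)"
      unfolding fI[symmetric] by (rule sum.reindex[unfolded comp_def]) (meson injf inj_on_subset subset_UNIV)
    define y :: "'b^'n" where "y = (\<chi> i. if i \<in> I then u (f i) else 0)"
    have "S *v y = (\<Sum>i\<in>UNIV. y$i *s f i)" by (rule Sx)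
    also have "\<dots> = (\<Sum>i\<in>I. y$i *s f i)"
      by (rule sum.mono_neutral_right) (auto simp: y_def)
    also have "\<dots> = (\<Sum>i\<in>I. u (f i) *s f i)" by (simp add: y_def)
    finally have "S *v (x - y) = 0"
      using u \<open>(\<Sum>v\<in>BW. u v *s v) = _\<close> by (simp add: matrix_vector_mult_diff_distrib)
    hence "x - y = 0" by (rule Sinj)
    hence "x = y" by simp
    thus "\<forall>j. j \<notin> I \<longrightarrow> x$j = 0" by (simp add: y_def)
  next
    assume h: "\<forall>j. j \<notin> I \<longrightarrow> x$j = 0"
    have "S *v x = (\<Sum>i\<in>UNIV. x$i *s f i)" by (rule Sx)
    also have "\<dots> = (\<Sum>i\<in>I. x$i *s f i)"
      by (rule sum.mono_neutral_right) (auto simp: h)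
    also have "\<dots> \<in> vec.span BW"
      by (intro vec.span_sum vec.span_scale vec.span_base) (auto simp: I_def)
    finally show "S *v x \<in> W" using spanW by blast
  qed
  have blkT: "blk I (S' ** T ** S)" if T: "M ** T = T ** M" for T
    unfolding blk_def
  proof (intro allI impI)
    fix j i assume j: "j \<notin> I" and i: "i \<in> I"
    define e :: "'b^'n" where "e = (\<chi> k. if k = i then 1 else 0)"
    have "S *v e \<in> W" using E[of e] i by (auto simp: e_def)
    moreover have "M *v (T *v v) = T *v (M *v v)" for v by (simp only: matrix_vector_mul_assoc T)
    ultimately have TW: "T *v (S *v e) \<in> W" by (simp add: W_def)
    have "S ** (S' ** T ** S) = T ** S"
      by (simp only: matrix_mul_assoc[symmetric] S'_def cancel_r[OF invS])
    hence "S *v ((S' ** T ** S) *v e) = T *v (S *v e)"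
      by (simp only: matrix_vector_mul_assoc)
    hence "S *v ((S' ** T ** S) *v e) \<in> W" using TW by simp
    hence "((S' ** T ** S) *v e) $ j = 0" using E j by blast
    thus "(S' ** T ** S) $ j $ i = 0" unfolding e_def col_extract .
  qed
  define ys where "ys = conj_tuple S' xs"
  have good: "\<forall>y\<in>set ys. good_pair I y"
  proof
    fix y assume "y \<in> set ys"
    then obtain A B where AB: "(A,B) \<in> set xs" and y: "y = (S' ** A ** S, S' ** B ** S)"
      unfolding ys_def conj_tuple_def S'S by auto
    have a: "invertible A" and b: "invertible B" using inv AB by auto
    have ca: "M ** A = A ** M" and cb: "M ** B = B ** M" using comm AB by auto
    show "good_pair I y"
      unfolding good_pair_def y
      using invertible_conj[OF invS' a] invertible_conj[OF invS' b]
        minv_conj[OF invS' a] minv_conj[OF invS' b] 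
        blkT[OF ca] blkT[OF cb] blkT[OF comm_inv[OF a ca]] blkT[OF comm_inv[OF b cb]]
      by (simp add: S'S)
  qed
  have cy: "comm_prod ys = mat \<zeta>"
    unfolding ys_def comm_prod_conj[OF invS' inv] cp by (rule conj_mat[OF invS'])
  have "det (cut I (comm_prod ys)) = 1" using comm_prod_block[OF good] by blast
  hence z1: "\<zeta> ^ card I = 1" unfolding cy det_cut_mat .
  have "\<not> (0 < card I \<and> card I < CARD('n))" using pr z1 unfolding primitive_root_def by blast
  hence "card I = 0 \<or> card I \<ge> CARD('n)" by linarith
  thus False
  proof
    assume "card I = 0"
    hence I: "I = {}" by simp
    have "S *v (S' *v w) \<in> W" using SS' w by (simp add: W_def)
    hence "S' *v w = 0" using E I by (simp add: vec_eq_iff)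
    hence "w = 0" using SS'[of w] by simp
    thus False using w by simp
  next
    assume "card I \<ge> CARD('n)"
    hence I: "I = UNIV" by (intro card_seteq) auto
    have "M *v v = 0 *v v" for v
    proof -
      have "S *v (S' *v v) \<in> W" using E I by simp
      thus ?thesis using SS' by (simp add: W_def)
    qed
    hence "M = 0" by (simp add: matrix_eq)
    thus False using M0 by simp
  qed
qed

lemma mm_add_r: "((A::'b::comm_ring_1^'n::finite^'m) + B) ** (C::'b^'k^'n) = A ** C + B ** C"
  by (simp add: vec_eq_iff matrix_matrix_mult_def ring_distribs sum.distrib)
lemma mm_diff_r: "((A::'b::comm_ring_1^'n::finite^'m) - B) ** (C::'b^'k^'n) = A ** C - B ** C"
  by (simp add: vec_eq_iff matrix_matrix_mult_def ring_distribs sum_subtractf)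
lemma mm_diff_l: "(A::'b::comm_ring_1^'n::finite^'m) ** ((B::'b^'k^'n) - C) = A ** B - A ** C"
  by (simp add: vec_eq_iff matrix_matrix_mult_def ring_distribs sum_subtractf)
lemma mm_zero_l: "(0::'b::comm_ring_1^'n::finite^'m) ** (A::'b^'k^'n) = 0"
  by (simp add: vec_eq_iff matrix_matrix_mult_def)
lemma mm_zero_r: "(A::'b::comm_ring_1^'n::finite^'m) ** (0::'b^'k^'n) = 0"
  by (simp add: vec_eq_iff matrix_matrix_mult_def)
lemma mm_sum_l: "(Z::'b::comm_ring_1^'n::finite^'m) ** (\<Sum>k\<in>K. f k :: 'b^'p^'n) = (\<Sum>k\<in>K. Z ** f k)"
  by (induction K rule: infinite_finite_induct) (simp_all add: mm_zero_r matrix_add_ldistrib)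
lemma mm_neg_r: "(- (A::'b::comm_ring_1^'n::finite^'m)) ** (C::'b^'k^'n) = - (A ** C)"
  by (simp add: vec_eq_iff matrix_matrix_mult_def sum_negf)
lemma mat_neg: "mat (-a) = - (mat a :: 'b::comm_ring_1^'n::finite^'n)"
  by (simp add: vec_eq_iff mat_def)
lemma mat_add: "mat (a + b) = (mat a + mat b :: 'b::comm_ring_1^'n::finite^'n)"
  by (simp add: vec_eq_iff mat_def)

lemma mat_comm3: "mat c ** ((M::'b::comm_ring_1^'n::finite^'n) ** Z) = M ** (mat c ** (Z::'b^'k^'n))"
  by (simp only: matrix_mul_assoc mat_comm[of c M])

primrec mpow :: "'b::comm_ring_1^'n::finite^'n \<Rightarrow> nat \<Rightarrow> 'b^'n^'n" where
  "mpow M 0 = mat 1"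
| "mpow M (Suc k) = M ** mpow M k"

definition mpoly :: "'b::comm_ring_1 poly \<Rightarrow> 'b^'n::finite^'n \<Rightarrow> 'b^'n^'n" where
  "mpoly p M = (\<Sum>k\<le>Polynomial.degree p. mat (Polynomial.coeff p k) ** mpow M k)"

lemma mpoly_le: "Polynomial.degree p \<le> N \<Longrightarrow> mpoly p M = (\<Sum>k\<le>N. mat (Polynomial.coeff p k) ** mpow M k)"
  unfolding mpoly_def
  by (rule sum.mono_neutral_left) (auto simp: coeff_eq_0 mm_zero_l)

lemma mpoly_add: "mpoly (p + q) M = mpoly p M + mpoly q M"
proof -
  define N where "N = max (Polynomial.degree p) (Polynomial.degree q)"
  have "Polynomial.degree (p + q) \<le> N" unfolding N_def by (rule degree_add_le) auto
  hence "mpoly (p + q) M = (\<Sum>k\<le>N. mat (Polynomial.coeff (p+q) k) ** mpow M k)" by (rule mpoly_le)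
  also have "\<dots> = (\<Sum>k\<le>N. mat (Polynomial.coeff p k) ** mpow M k) + (\<Sum>k\<le>N. mat (Polynomial.coeff q k) ** mpow M k)"
    by (simp add: mat_add mm_add_r sum.distrib)
  also have "\<dots> = mpoly p M + mpoly q M"
    using mpoly_le[of p N M] mpoly_le[of q N M] by (simp add: N_def)
  finally show ?thesis .
qed

lemma mpoly_smult: "mpoly (Polynomial.smult c p) M = mat c ** mpoly p M"
proof -
  have "mpoly (Polynomial.smult c p) M = (\<Sum>k\<le>Polynomial.degree p. mat (Polynomial.coeff (Polynomial.smult c p) k) ** mpow M k)"
    by (rule mpoly_le) (rule degree_smult_le)
  also have "\<dots> = (\<Sum>k\<le>Polynomial.degree p. mat c ** (mat (Polynomial.coeff p k) ** mpow M k))"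
    by (simp add: matrix_mul_assoc mat_mult_mat)
  also have "\<dots> = mat c ** mpoly p M" by (simp add: mpoly_def mm_sum_l)
  finally show ?thesis .
qed

lemma mpoly_pCons0: "mpoly (pCons 0 p) M = M ** mpoly p M"
proof -
  have "mpoly (pCons 0 p) M = (\<Sum>k\<le>Suc (Polynomial.degree p). mat (Polynomial.coeff (pCons 0 p) k) ** mpow M k)"
    by (rule mpoly_le) (simp add: degree_pCons_le)
  also have "\<dots> = (\<Sum>k\<le>Polynomial.degree p. mat (Polynomial.coeff p k) ** (M ** mpow M k))"
    by (subst sum.atMost_Suc_shift) (simp add: mm_zero_l)
  also have "\<dots> = (\<Sum>k\<le>Polynomial.degree p. M ** (mat (Polynomial.coeff p k) ** mpow M k))"
    by (intro sum.cong refl) (rule mat_comm3)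
  also have "\<dots> = M ** mpoly p M" by (simp add: mpoly_def mm_sum_l)
  finally show ?thesis .
qed

lemma mpoly_const: "mpoly [:c:] M = mat c"
  by (simp add: mpoly_def)

lemma mpoly_one: "mpoly 1 M = mat 1"
  using mpoly_const[of 1 M] by (simp add: one_pCons)

lemma mpoly_lin: "mpoly ([:-a, 1:] * q) M = (M - mat a) ** mpoly q M"
proof -
  have eq: "[:-a, 1:] * q = Polynomial.smult (-a) q + pCons 0 q" by simp
  have "mpoly ([:-a, 1:] * q) M = mat (-a) ** mpoly q M + M ** mpoly q M"
    unfolding eq mpoly_add mpoly_smult mpoly_pCons0 by (rule refl)
  also have "\<dots> = (M - mat a) ** mpoly q M"
    by (simp add: mat_neg mm_diff_r mm_neg_r)
  finally show ?thesis .
qed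

lemma mpoly_xpow: "mpoly ([:0,1:]^k) M = mpow M k"
proof (induction k)
  case 0
  then show ?case using mpoly_one by simp
next
  case (Suc k)
  have eq: "[:0,1:]^Suc k = pCons 0 ([:0,1:]^k)" by simp
  show ?case unfolding eq mpoly_pCons0 Suc by simp
qed

lemma mpoly_diff: "mpoly (p - q) M = mpoly p M - mpoly q M"
proof -
  have eq: "p - q = p + Polynomial.smult (-1) q" by simp
  show ?thesis unfolding eq mpoly_add mpoly_smult mat_neg mm_neg_r by simp
qed

lemma invertible_one: "invertible (mat 1 :: 'b::field^'n::finite^'n)"
  unfolding invertible_def by (rule exI[of _ "mat 1"]) simp

lemma not_inv0: "\<not> invertible (0 :: 'b::field^'n::finite^'n)"
proof
  assume "invertible (0 :: 'b::field^'n::finite^'n)"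
  then obtain B :: "'b^'n^'n" where "0 ** B = mat 1" unfolding invertible_def by blast
  hence "(0::'b^'n^'n) = mat 1" by (simp add: mm_zero_l)
  hence "(0::'b^'n^'n) $ i $ i = mat 1 $ i $ i" for i by simp
  thus False by (simp add: mat_nth)
qed

lemma invertible_mat: "c \<noteq> 0 \<Longrightarrow> invertible (mat c :: 'b::field^'n::finite^'n)"
  using invertible_right_inverse[of "mat c"] mat_mult_mat[of c "inverse c"] by auto

lemma mpoly_prod_inv:
  fixes M :: "'b::field^'n::finite^'n"
  shows "(\<forall>x\<in>#A. invertible (M - mat x)) \<Longrightarrow> invertible (mpoly (\<Prod>x\<in>#A. [:-x, 1:]) M)"
proof (induction A)
  case empty
  then show ?case by (simp add: mpoly_one invertible_one)
next
  case (add a A)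
  have eq: "(\<Prod>x\<in>#add_mset a A. [:-x, 1:]) = [:-a, 1:] * (\<Prod>x\<in>#A. [:-x, 1:])" by simp
  show ?case unfolding eq mpoly_lin using add by (intro invertible_mult) auto
qed

lemma eigen_exists:
  fixes M :: "'c::alg_closed_field^'n::finite^'n"
  assumes "mpow M c = mat 1" "0 < c"
  shows "\<exists>a. \<not> invertible (M - mat a)"
proof (rule ccontr)
  assume "\<not> (\<exists>a. \<not> invertible (M - mat a))"
  hence all: "\<forall>a. invertible (M - mat a)" by blast
  define p :: "'c poly" where "p = [:0,1:]^c - 1"
  have dp: "Polynomial.degree ([:0::'c,1:]^c) = c" by (rule degree_linear_power)
  have p0: "p \<noteq> 0"
  proof
    assume "p = 0"
    hence "[:0::'c,1:]^c = 1" unfolding p_def by simp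
    thus False using dp assms(2) by simp
  qed
  obtain A where fac: "p = Polynomial.smult (Polynomial.lead_coeff p) (\<Prod>x\<in>#A. [:-x, 1:])"
    using alg_closed_imp_factorization[OF p0] by blast
  have lc: "Polynomial.lead_coeff p \<noteq> 0" using p0 by simp
  have "mpoly p M = mpow M c - mat 1"
    unfolding p_def mpoly_diff mpoly_xpow mpoly_one ..
  also have "\<dots> = 0" using assms(1) by simp
  finally have mp0: "mpoly p M = 0" .
  have "mpoly p M = mat (Polynomial.lead_coeff p) ** mpoly (\<Prod>x\<in>#A. [:-x, 1:]) M"
    by (subst fac) (rule mpoly_smult)
  moreover have "invertible (mat (Polynomial.lead_coeff p) ** mpoly (\<Prod>x\<in>#A. [:-x, 1:]) M)"
    using invertible_mat[OF lc] mpoly_prod_inv[of A M] all by (intro invertible_mult) auto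
  ultimately show False using mp0 not_inv0 by metis
qed

definition mapm :: "'a::field^'n::finite^'n \<Rightarrow> 'a alg_closure^'n^'n" where
  "mapm A = (\<chi> i j. to_ac (A$i$j))"

lemma mapm_mult: "mapm (A ** B) = mapm A ** mapm B"
  by (simp add: mapm_def vec_eq_iff matrix_matrix_mult_def to_ac_sum)

lemma mapm_mat: "mapm (mat c) = mat (to_ac c)"
  by (simp add: mapm_def vec_eq_iff mat_nth)

lemma mapm_diff: "mapm (A - B) = mapm A - mapm B"
  by (simp add: mapm_def vec_eq_iff)

lemma mapm_inj: "mapm A = mapm B \<Longrightarrow> A = B"
  by (simp add: mapm_def vec_eq_iff)

lemma mapm_inv: assumes "invertible (A::'a::field^'n::finite^'n)"
  shows "invertible (mapm A)" "matrix_inv (mapm A) = mapm (matrix_inv A)"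
proof -
  have "mapm A ** mapm (matrix_inv A) = mat 1"
    by (simp add: mapm_mult[symmetric] minv_r[OF assms] mapm_mat)
  thus "invertible (mapm A)" "matrix_inv (mapm A) = mapm (matrix_inv A)"
    using invertible_right_inverse minv_unique by blast+
qed

lemma mapm_mpow: "mpow (mapm P) k = mapm (mpow P k)"
  by (induction k) (simp_all add: mapm_mat mapm_mult)

lemma mapm_comm_prod:
  assumes "\<forall>(A,B)\<in>set xs. invertible (A::'a::field^'n::finite^'n) \<and> invertible B"
  shows "comm_prod (map (\<lambda>(A,B). (mapm A, mapm B)) xs) = mapm (comm_prod xs)"
  using assms
proof (induction xs)
  case Nil
  then show ?case by (simp add: comm_prod_Nil mapm_mat)
next
  case (Cons x xs)
  obtain A B where x: "x = (A,B)" by fastforce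
  have a: "invertible A" and b: "invertible B" using Cons.prems x by auto
  have ih: "comm_prod (map (\<lambda>(A,B). (mapm A, mapm B)) xs) = mapm (comm_prod xs)" using Cons by auto
  show ?case
    by (simp add: x comm_prod_Cons ih commutator_def mapm_mult mapm_inv[OF a] mapm_inv[OF b])
qed

lemma mpow_add: "mpow P (a + k) = mpow P a ** mpow P k"
  by (induction a) (simp_all add: matrix_mul_assoc)

lemma mpow_inv: "invertible (P::'b::field^'n::finite^'n) \<Longrightarrow> invertible (mpow P k)"
  by (induction k) (simp_all add: invertible_one invertible_mult)

lemma fin_order:
  fixes P :: "'a::{field,finite}^'n::finite^'n"
  assumes "invertible P"
  shows "\<exists>c>0. mpow P c = mat 1"
proof -
  have "\<not> inj (mpow P)"
  proof
    assume "inj (mpow P)"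
    moreover have "finite (range (mpow P))" by simp
    ultimately have "finite (UNIV::nat set)" using finite_imageD by blast
    thus False by simp
  qed
  then obtain a b where ab: "a \<noteq> b" "mpow P a = mpow P b" unfolding inj_def by blast
  have "\<exists>a b. a < b \<and> mpow P a = mpow P b"
  proof (cases "a < b")
    case True thus ?thesis using ab by blast
  next
    case False hence "b < a" using ab(1) by simp
    thus ?thesis using ab(2) by (intro exI[of _ b] exI[of _ a]) simp
  qed
  then obtain a b where ab: "a < b" "mpow P a = mpow P b" by blast
  define k where "k = b - a"
  have k: "k > 0" "b = a + k" using ab unfolding k_def by auto
  have ia: "invertible (mpow P a)" using mpow_inv[OF assms] .
  have "mpow P a ** mat 1 = mpow P a ** mpow P k" using ab k mpow_add[of P a k] by simp
  hence "matrix_inv (mpow P a) ** (mpow P a ** mat 1) = matrix_inv (mpow P a) ** (mpow P a ** mpow P k)" by simp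
  hence "mpow P k = mat 1" unfolding cancel_l[OF ia] by simp
  thus ?thesis using k by blast
qed

lemma primitive_root_to_ac: "primitive_root n z \<Longrightarrow> primitive_root n (to_ac z)"
proof -
  have e: "to_ac z ^ k = 1 \<longleftrightarrow> z ^ k = 1" for k
    by (simp only: to_ac_power[symmetric] to_ac_eq_iff[of _ 1, unfolded to_ac_1])
  show "primitive_root n z \<Longrightarrow> primitive_root n (to_ac z)" by (simp add: primitive_root_def e)
qed

lemma stab_scalar:
  fixes P :: "'a::{field,finite}^'n::finite^'n" and xs :: "(('a^'n^'n) \<times> ('a^'n^'n)) list"
  assumes inv: "\<forall>(A,B)\<in>set xs. invertible A \<and> invertible B"
    and cp: "comm_prod xs = mat \<zeta>" and pr: "primitive_root CARD('n) \<zeta>"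
    and iP: "invertible P"
    and comm: "\<forall>(A,B)\<in>set xs. P ** A = A ** P \<and> P ** B = B ** P"
  shows "\<exists>c. P = mat c"
proof -
  define M where "M = mapm P"
  define ys where "ys = map (\<lambda>(A,B). (mapm A, mapm B)) xs"
  have invy: "\<forall>(A,B)\<in>set ys. invertible A \<and> invertible B"
    using inv mapm_inv(1) unfolding ys_def by auto
  have cpy: "comm_prod ys = mat (to_ac \<zeta>)"
    unfolding ys_def mapm_comm_prod[OF inv] cp mapm_mat ..
  have pry: "primitive_root CARD('n) (to_ac \<zeta>)" by (rule primitive_root_to_ac[OF pr])
  obtain c where c: "c > 0" "mpow P c = mat 1" using fin_order[OF iP] by blast
  have "mpow M c = mat 1" unfolding M_def mapm_mpow c(2) mapm_mat by simp
  then obtain a where na: "\<not> invertible (M - mat a)" using eigen_exists c(1) by blast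
  have commy: "\<forall>(A,B)\<in>set ys. (M - mat a) ** A = A ** (M - mat a) \<and> (M - mat a) ** B = B ** (M - mat a)"
  proof (intro ballI, clarify)
    fix A' B' assume "(A', B') \<in> set ys"
    then obtain A B where AB: "(A,B) \<in> set xs" "A' = mapm A" "B' = mapm B" unfolding ys_def by auto
    have "P ** A = A ** P" "P ** B = B ** P" using comm AB(1) by auto
    hence "M ** A' = A' ** M" "M ** B' = B' ** M" unfolding M_def AB(2,3) mapm_mult[symmetric] by simp_all
    thus "(M - mat a) ** A' = A' ** (M - mat a) \<and> (M - mat a) ** B' = B' ** (M - mat a)"
      by (simp add: mm_diff_r mm_diff_l mat_comm)
  qed
  have "M - mat a = 0" using kernel_claim[OF invy cpy pry commy] na by blast
  hence Ma: "M = mat a" by simp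
  obtain i0 :: 'n where True by blast
  have Mij: "M $ i $ j = to_ac (P $ i $ j)" for i j by (simp add: M_def mapm_def)
  have "P $ i $ j = mat (P $ i0 $ i0) $ i $ j" for i j
  proof -
    have "to_ac (P $ i $ j) = mat a $ i $ j" using Ma Mij by simp
    moreover have "to_ac (P $ i0 $ i0) = a" using Ma Mij[of i0 i0] by (simp add: mat_nth)
    ultimately show ?thesis by (cases "i = j") (auto simp: mat_nth)
  qed
  hence h: "\<forall>i j. P $ i $ j = mat (P $ i0 $ i0) $ i $ j" by blast
  have "P = mat (P $ i0 $ i0)" unfolding vec_eq_iff using h by blast
  thus ?thesis by blast
qed

lemma card_image_rel:
  assumes "\<forall>x\<in>A. \<forall>y\<in>A. f x = f y \<longleftrightarrow> g x = g y"
  shows "card (f ` A) = card (g ` A)"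
proof -
  define h where "h z = g (inv_into A f z)" for z
  have h: "h (f x) = g x" if "x \<in> A" for x
  proof -
    have "inv_into A f (f x) \<in> A" using that by (simp add: inv_into_into)
    moreover have "f (inv_into A f (f x)) = f x" using that by (simp add: f_inv_into_f)
    ultimately show ?thesis using assms that unfolding h_def by blast
  qed
  have "inj_on h (f ` A)"
  proof (rule inj_onI)
    fix u v assume "u \<in> f ` A" "v \<in> f ` A" "h u = h v"
    then obtain x y where "x \<in> A" "y \<in> A" "u = f x" "v = f y" "g x = g y" using h by auto
    thus "u = v" using assms by blast
  qed
  moreover have "h ` f ` A = g ` A" using h by (auto simp: image_iff)
  ultimately show ?thesis by (metis card_image)
qed

lemma SL_inv: "A \<in> SL \<Longrightarrow> invertible (A::'b::field^'n::finite^'n)"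
  by (simp add: SL_def invertible_det_nz)

lemma tt_inv: "xs \<in> twisted_tuples g \<zeta> \<Longrightarrow> \<forall>(A,B)\<in>set xs. invertible (A::'b::field^'n::finite^'n) \<and> invertible B"
  unfolding twisted_tuples_def using SL_inv by fastforce

lemma det_conj: "invertible (P::'b::field^'n::finite^'n) \<Longrightarrow> det (P ** A ** matrix_inv P) = det A"
proof -
  assume p: "invertible P"
  have "det P * det (matrix_inv P) = 1" by (simp only: det_mul[symmetric] minv_r[OF p] det_I)
  thus ?thesis by (simp add: det_mul)
qed

lemma conj_closed:
  fixes P :: "'b::field^'n::finite^'n" and xs :: "(('b^'n^'n) \<times> ('b^'n^'n)) list"
  assumes P: "P \<in> GL" and xs: "xs \<in> twisted_tuples g \<zeta>"
  shows "conj_tuple P xs \<in> twisted_tuples g \<zeta>"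
proof -
  have p: "invertible P" using P by (simp add: GL_def)
  have inv: "\<forall>(A,B)\<in>set xs. invertible A \<and> invertible B" using tt_inv[OF xs] .
  have "comm_prod (conj_tuple P xs) = mat \<zeta>"
    using xs unfolding comm_prod_conj[OF p inv] twisted_tuples_def by (simp add: conj_mat[OF p])
  moreover have "length (conj_tuple P xs) = g" using xs by (simp add: conj_tuple_def twisted_tuples_def)
  moreover have "\<forall>(A, B)\<in>set (conj_tuple P xs). A \<in> SL \<and> B \<in> SL"
    using xs by (auto simp: conj_tuple_def twisted_tuples_def SL_def det_conj[OF p])
  ultimately show ?thesis by (simp add: twisted_tuples_def)
qed

lemma conj_comp: "invertible (P::'b::field^'n::finite^'n) \<Longrightarrow> invertible (Q::'b^'n^'n) \<Longrightarrow>
  conj_tuple P (conj_tuple Q xs) = conj_tuple (P ** Q) xs"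
  by (simp add: conj_tuple_def minv_mult matrix_mul_assoc split_beta)

lemma minv_mat: "c \<noteq> 0 \<Longrightarrow> matrix_inv (mat c :: 'b::field^'n::finite^'n) = mat (inverse c)"
  by (rule minv_unique) (simp add: mat_mult_mat)

lemma conj_scalar: "(c::'b::field) \<noteq> 0 \<Longrightarrow> conj_tuple (mat c :: 'b^'n::finite^'n) xs = xs"
proof -
  assume c: "c \<noteq> 0"
  have "mat c ** A ** mat (inverse c) = A" for A :: "'b^'n^'n"
    by (simp only: mat_comm[of c A] matrix_mul_assoc[symmetric] mat_mult_mat) (simp add: c)
  thus ?thesis by (simp add: conj_tuple_def minv_mat[OF c] map_idI split_beta)
qed

lemma conj_one: "conj_tuple (mat 1 :: 'b::field^'n::finite^'n) xs = xs"
  using conj_scalar[of "1::'b"] by simp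

lemma scalar_rel_equiv: "equiv (GL :: ('b::field^'n::finite^'n) set) scalar_rel"
proof (rule equivI)
  show "scalar_rel \<subseteq> (GL :: ('b::field^'n::finite^'n) set) \<times> GL" by (auto simp: scalar_rel_def)
  show "refl_on (GL :: ('b::field^'n::finite^'n) set) scalar_rel"
    by (rule refl_onI) (auto simp: scalar_rel_def intro!: exI[of _ 1])
  show "sym (scalar_rel :: ('b::field^'n::finite^'n) rel)"
  proof (rule symI)
    fix P Q :: "'b^'n^'n" assume "(P,Q) \<in> scalar_rel"
    then obtain c where c: "P \<in> GL" "Q \<in> GL" "c \<noteq> 0" "Q = mat c ** P" by (auto simp: scalar_rel_def)
    have "P = mat (inverse c) ** Q" using c by (simp add: matrix_mul_assoc mat_mult_mat)
    moreover have "inverse c \<noteq> 0" using c by simp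
    ultimately show "(Q,P) \<in> scalar_rel" using c unfolding scalar_rel_def by blast
  qed
  show "trans (scalar_rel :: ('b::field^'n::finite^'n) rel)"
  proof (rule transI)
    fix P Q R :: "'b^'n^'n" assume "(P,Q) \<in> scalar_rel" "(Q,R) \<in> scalar_rel"
    then obtain c d where c: "P \<in> GL" "Q \<in> GL" "R \<in> GL" "c \<noteq> 0" "Q = mat c ** P" "d \<noteq> 0" "R = mat d ** Q"
      by (auto simp: scalar_rel_def)
    have "R = mat (d * c) ** P" using c by (simp add: matrix_mul_assoc mat_mult_mat)
    moreover have "d * c \<noteq> 0" using c by simp
    ultimately show "(P,R) \<in> scalar_rel" using c unfolding scalar_rel_def by blast
  qed
qed

lemma conj_rel_equiv:
  "equiv (twisted_tuples g \<zeta> :: (('b::field^'n::finite^'n) \<times> ('b^'n^'n)) list set) (conj_rel (twisted_tuples g \<zeta>))"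
proof (rule equivI)
  let ?Xm = "twisted_tuples g \<zeta> :: (('b::field^'n::finite^'n) \<times> ('b^'n^'n)) list set"
  show "conj_rel ?Xm \<subseteq> ?Xm \<times> ?Xm" by (auto simp: conj_rel_def)
  show "refl_on ?Xm (conj_rel ?Xm)"
    by (rule refl_onI) (auto simp: conj_rel_def GL_def conj_one intro!: bexI[of _ "mat 1"] invertible_one)
  show "sym (conj_rel ?Xm)"
  proof (rule symI)
    fix s t assume "(s,t) \<in> conj_rel ?Xm"
    then obtain P where P: "s \<in> ?Xm" "t \<in> ?Xm" "P \<in> GL" "t = conj_tuple P s" by (auto simp: conj_rel_def)
    have p: "invertible P" using P by (simp add: GL_def)
    have "conj_tuple (matrix_inv P) t = s"
      using P(4) conj_comp[OF invertible_minv[OF p] p] minv_l[OF p] conj_one by simp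
    moreover have "matrix_inv P \<in> GL" using invertible_minv[OF p] by (simp add: GL_def)
    ultimately show "(t,s) \<in> conj_rel ?Xm" using P unfolding conj_rel_def by (auto intro!: bexI[of _ "matrix_inv P"])
  qed
  show "trans (conj_rel ?Xm)"
  proof (rule transI)
    fix s t u assume "(s,t) \<in> conj_rel ?Xm" "(t,u) \<in> conj_rel ?Xm"
    then obtain P Q where P: "s \<in> ?Xm" "t \<in> ?Xm" "u \<in> ?Xm" "P \<in> GL" "t = conj_tuple P s" "Q \<in> GL" "u = conj_tuple Q t"
      by (auto simp: conj_rel_def)
    have "u = conj_tuple (Q ** P) s" using P conj_comp by (simp add: GL_def)
    moreover have "Q ** P \<in> GL" using P by (simp add: GL_def invertible_mult)
    ultimately show "(s,u) \<in> conj_rel ?Xm" using P unfolding conj_rel_def by blast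
  qed
qed

lemma map_fix: "map f xs = xs \<Longrightarrow> x \<in> set xs \<Longrightarrow> f x = x"
  by (induction xs) auto

lemma stab:
  fixes P :: "'a::{field,finite}^'n::finite^'n" and xs :: "(('a^'n^'n) \<times> ('a^'n^'n)) list"
  assumes xs: "xs \<in> twisted_tuples g \<zeta>" and pr: "primitive_root CARD('n) \<zeta>"
    and p: "invertible P" and fx: "conj_tuple P xs = xs"
  shows "\<exists>c. c \<noteq> 0 \<and> P = mat c"
proof -
  have inv: "\<forall>(A,B)\<in>set xs. invertible A \<and> invertible B" by (rule tt_inv[OF xs])
  have cp: "comm_prod xs = mat \<zeta>" using xs by (simp add: twisted_tuples_def)
  have c1: "P ** A = A ** P" if h: "P ** A ** matrix_inv P = A" for A
  proof -
    have "P ** A = (P ** A ** matrix_inv P) ** P"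
      by (simp only: matrix_mul_assoc[symmetric] minv_l[OF p] matrix_mul_rid)
    thus ?thesis unfolding h .
  qed
  have comm: "\<forall>(A,B)\<in>set xs. P ** A = A ** P \<and> P ** B = B ** P"
  proof (intro ballI, clarify)
    fix A B assume AB: "(A,B) \<in> set xs"
    have "(\<lambda>(A, B). (P ** A ** matrix_inv P, P ** B ** matrix_inv P)) (A,B) = (A,B)"
      using fx AB unfolding conj_tuple_def by (rule map_fix)
    hence "P ** A ** matrix_inv P = A" "P ** B ** matrix_inv P = B" by auto
    thus "P ** A = A ** P \<and> P ** B = B ** P" using c1 by blast
  qed
  obtain c where c: "P = mat c" using stab_scalar[OF inv cp pr p comm] by blast
  have "c \<noteq> 0"
  proof
    assume "c = 0"
    hence "P = 0" using c by simp
    thus False using p not_inv0 by blast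
  qed
  thus ?thesis using c by blast
qed

lemma fiber:
  fixes P Q :: "'a::{field,finite}^'n::finite^'n" and xs :: "(('a^'n^'n) \<times> ('a^'n^'n)) list"
  assumes xs: "xs \<in> twisted_tuples g \<zeta>" and pr: "primitive_root CARD('n) \<zeta>"
    and P: "P \<in> GL" and Q: "Q \<in> GL"
  shows "conj_tuple P xs = conj_tuple Q xs \<longleftrightarrow> (P,Q) \<in> scalar_rel"
proof
  have p: "invertible P" and q: "invertible Q" using P Q by (auto simp: GL_def)
  have q': "invertible (matrix_inv Q)" by (rule invertible_minv[OF q])
  assume h: "conj_tuple P xs = conj_tuple Q xs"
  have "conj_tuple (matrix_inv Q ** P) xs = conj_tuple (matrix_inv Q) (conj_tuple P xs)"
    using conj_comp[OF q' p] by simp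
  also have "\<dots> = conj_tuple (matrix_inv Q ** Q) xs" unfolding h using conj_comp[OF q' q] by simp
  also have "\<dots> = xs" by (simp add: minv_l[OF q] conj_one)
  finally have "conj_tuple (matrix_inv Q ** P) xs = xs" .
  then obtain c where c: "c \<noteq> 0" "matrix_inv Q ** P = mat c"
    using stab[OF xs pr invertible_mult[OF q' p]] by blast
  have "P = Q ** mat c" unfolding c(2)[symmetric] by (simp only: cancel_r[OF q])
  hence "P = mat c ** Q" by (simp add: mat_comm)
  hence "Q = mat (inverse c) ** P" using c(1) by (simp add: matrix_mul_assoc mat_mult_mat)
  moreover have "inverse c \<noteq> 0" using c by simp
  ultimately show "(P,Q) \<in> scalar_rel" using P Q unfolding scalar_rel_def by blast
next
  assume "(P,Q) \<in> scalar_rel"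
  then obtain c where c: "c \<noteq> 0" "Q = mat c ** P" by (auto simp: scalar_rel_def)
  have p: "invertible P" using P by (simp add: GL_def)
  have "conj_tuple Q xs = conj_tuple (mat c) (conj_tuple P xs)"
    unfolding c(2) using conj_comp[OF invertible_mat[OF c(1)] p] by simp
  also have "\<dots> = conj_tuple P xs" by (rule conj_scalar[OF c(1)])
  finally show "conj_tuple P xs = conj_tuple Q xs" by simp
qed

lemma orbit_card:
  fixes xs :: "(('a::{field,finite}^'n::finite^'n) \<times> ('a^'n^'n)) list"
  assumes xs: "xs \<in> twisted_tuples g \<zeta>" and pr: "primitive_root CARD('n) \<zeta>"
  shows "card (conj_rel (twisted_tuples g \<zeta>) `` {xs}) = card (PGL :: ('a^'n^'n) set set)"
proof -
  have o: "conj_rel (twisted_tuples g \<zeta>) `` {xs} = (\<lambda>P. conj_tuple P xs) ` (GL :: ('a^'n^'n) set)"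
    using xs by (auto simp: conj_rel_def conj_closed)
  have pg: "(PGL :: ('a^'n^'n) set set) = (\<lambda>P. scalar_rel `` {P}) ` GL"
    by (auto simp: PGL_def quotient_def)
  have "\<forall>P\<in>(GL :: ('a^'n^'n) set). \<forall>Q\<in>GL. conj_tuple P xs = conj_tuple Q xs \<longleftrightarrow> scalar_rel `` {P} = scalar_rel `` {Q}"
    using fiber[OF xs pr] eq_equiv_class_iff[OF scalar_rel_equiv] by blast
  thus ?thesis unfolding o pg by (rule card_image_rel)
qed

theorem corollary3p3:
  fixes \<zeta> :: "'a::{field, finite}" and g :: nat
  assumes "CARD('n::finite) dvd CARD('a) - 1"
    and "primitive_root CARD('n) \<zeta>"
    and "g \<ge> 1"
  shows "real (card (twisted_tuples g \<zeta> // conj_rel (twisted_tuples g \<zeta> :: (('a, 'n) sqmat \<times> ('a, 'n) sqmat) list set)))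
         = real (card (twisted_tuples g \<zeta> :: (('a, 'n) sqmat \<times> ('a, 'n) sqmat) list set))
           / real (card (PGL :: ('a, 'n) sqmat set set))"
proof -
  let ?Xm = "twisted_tuples g \<zeta> :: (('a, 'n) sqmat \<times> ('a, 'n) sqmat) list set"
  let ?R = "conj_rel ?Xm"
  let ?C = "?Xm // ?R"
  let ?k = "card (PGL :: ('a, 'n) sqmat set set)"
  have eqv: "equiv ?Xm ?R" by (rule conj_rel_equiv)
  have "?Xm \<subseteq> {xs. set xs \<subseteq> UNIV \<and> length xs = g}" by (auto simp: twisted_tuples_def)
  moreover have "finite {xs. set xs \<subseteq> (UNIV :: (('a, 'n) sqmat \<times> ('a, 'n) sqmat) set) \<and> length xs = g}"
    by (rule finite_lists_length_eq) simp
  ultimately have finX: "finite ?Xm" by (rule finite_subset)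
  have finC: "finite ?C" using finX by (rule finite_quotient) (auto simp: conj_rel_def)
  have U: "\<Union> ?C = ?Xm" by (rule Union_quotient[OF eqv])
  have cards: "\<forall>c\<in>?C. card c = ?k"
  proof
    fix c assume "c \<in> ?C"
    then obtain xs where "c = ?R `` {xs}" "xs \<in> ?Xm" by (rule quotientE)
    thus "card c = ?k" using orbit_card[OF _ assms(2)] by simp
  qed
  have disj: "\<forall>c1\<in>?C. \<forall>c2\<in>?C. c1 \<noteq> c2 \<longrightarrow> c1 \<inter> c2 = {}"
    using quotient_disj[OF eqv] by blast
  have "?k * card ?C = card (\<Union> ?C)"
    using finC U finX cards disj by (intro card_partition) auto
  hence main: "?k * card ?C = card ?Xm" unfolding U .
  have "mat 1 \<in> (GL :: ('a, 'n) sqmat set)" by (simp add: GL_def invertible_one)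
  hence "scalar_rel `` {mat 1} \<in> (PGL :: ('a, 'n) sqmat set set)"
    unfolding PGL_def by (rule quotientI)
  moreover have "finite (PGL :: ('a, 'n) sqmat set set)"
    unfolding PGL_def by (rule finite_quotient) (auto simp: scalar_rel_def)
  ultimately have "?k > 0" using card_gt_0_iff by blast
  hence kn: "real ?k \<noteq> 0" by (metis gr_implies_not0 of_nat_eq_0_iff)
  have pr: "real (card ?C) * real ?k = real (card ?Xm)" using main by (metis of_nat_mult mult.commute)
  show ?thesis using kn pr by (simp add: eq_divide_eq)
qed

end
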